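(* There exists a countable poset $P$ such that the space $\mathrm{UF}(P)$ is Hausdorff but not regular.
   Context: A filter on a poset $(P,\le_P)$ is an upward closed subset in which any two elements have a common lower bound in the set; it is unbounded if there is no $r\in P$ with $r<_P p$ for all $p$ in it ($r<_Pp$ meaning $r\le_Pp$ and not $p\le_Pr$). $\mathrm{UF}(P)$ is the set of unbounded filters on $P$ with topology generated by the sets $N_p=\{F:p\in F\}$, $p\in P$. *)

theory Defs
  imports "HOL-Analysis.Analysis"
begin

definition poset_on :: "'a set \<Rightarrow> ('a \<Rightarrow> 'a \<Rightarrow> bool) \<Rightarrow> bool" where
  "poset_on P le \<longleftrightarrow>
     (\<forall>x\<in>P. le x x) \<and>
     (\<forall>x\<in>P. \<forall>y\<in>P. le x y \<and> le y x \<longrightarrow> x = y) \<and>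
     (\<forall>x\<in>P. \<forall>y\<in>P. \<forall>z\<in>P. le x y \<and> le y z \<longrightarrow> le x z)"

definition strict_le :: "('a \<Rightarrow> 'a \<Rightarrow> bool) \<Rightarrow> 'a \<Rightarrow> 'a \<Rightarrow> bool" where
  "strict_le le r p \<longleftrightarrow> le r p \<and> \<not> le p r"

definition is_filter :: "'a set \<Rightarrow> ('a \<Rightarrow> 'a \<Rightarrow> bool) \<Rightarrow> 'a set \<Rightarrow> bool" where
  "is_filter P le F \<longleftrightarrow>
     F \<subseteq> P \<and>
     (\<forall>p\<in>F. \<forall>q\<in>P. le p q \<longrightarrow> q \<in> F) \<and>
     (\<forall>p\<in>F. \<forall>q\<in>F. \<exists>r\<in>F. le r p \<and> le r q)"

definition unbounded_filter :: "'a set \<Rightarrow> ('a \<Rightarrow> 'a \<Rightarrow> bool) \<Rightarrow> 'a set \<Rightarrow> bool" where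
  "unbounded_filter P le F \<longleftrightarrow>
     is_filter P le F \<and> \<not> (\<exists>r\<in>P. \<forall>p\<in>F. strict_le le r p)"

definition UF :: "'a set \<Rightarrow> ('a \<Rightarrow> 'a \<Rightarrow> bool) \<Rightarrow> 'a set set" where
  "UF P le = {F. unbounded_filter P le F}"

definition UF_nbhd :: "'a set \<Rightarrow> ('a \<Rightarrow> 'a \<Rightarrow> bool) \<Rightarrow> 'a \<Rightarrow> 'a set set" where
  "UF_nbhd P le p = {F \<in> UF P le. p \<in> F}"

text \<open>Topology on UF(P) generated by the sets N_p (the whole space UF(P) is included so that
  the topspace is exactly UF(P)).\<close>
definition UF_topology :: "'a set \<Rightarrow> ('a \<Rightarrow> 'a \<Rightarrow> bool) \<Rightarrow> 'a set topology" where
  "UF_topology P le = topology_generated_by (insert (UF P le) (UF_nbhd P le ` P))"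

end

theory Submission
  imports Defs "HOL-Library.Nat_Bijection"
begin

lemma topspace_UF: "topspace (UF_topology P le) = UF P le"
  unfolding UF_topology_def topology_generated_by_topspace UF_nbhd_def by blast

lemma open_nbhd: "p \<in> P \<Longrightarrow> openin (UF_topology P le) (UF_nbhd P le p)"
  unfolding UF_topology_def by (rule topology_generated_by_Basis) (rule insertI2, rule imageI)

lemma UF_nonempty: "P \<noteq> {} \<Longrightarrow> G \<in> UF P le \<Longrightarrow> G \<noteq> {}"
  unfolding UF_def unbounded_filter_def by blast

lemma nbhd_mono:
  assumes "G \<in> UF P le" "r \<in> G" "p \<in> G" "le r p"
  shows "UF_nbhd P le r \<subseteq> UF_nbhd P le p"
proof
  have pP: "p \<in> P" using assms unfolding UF_def unbounded_filter_def is_filter_def by blast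
  fix H assume "H \<in> UF_nbhd P le r"
  then have H: "H \<in> UF P le" "r \<in> H" unfolding UF_nbhd_def by blast+
  then have "p \<in> H" using pP assms(4) unfolding UF_def unbounded_filter_def is_filter_def by blast
  then show "H \<in> UF_nbhd P le p" using H unfolding UF_nbhd_def by blast
qed

lemma gen_sub:
  "generate_topology_on (insert (UF P le) (UF_nbhd P le ` P)) U \<Longrightarrow> U \<subseteq> UF P le"
proof (induction rule: generate_topology_on.induct)
  case (Basis s)
  then show ?case unfolding UF_nbhd_def by blast
qed blast+

lemma gen_basic:
  assumes "P \<noteq> {}" "generate_topology_on (insert (UF P le) (UF_nbhd P le ` P)) U"
  shows "\<forall>G\<in>U. \<exists>p\<in>G. UF_nbhd P le p \<subseteq> U"
  using assms(2)
proof (induction rule: generate_topology_on.induct)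
  case Empty
  then show ?case by simp
next
  case (Int a b)
  show ?case
  proof
    fix G assume G: "G \<in> a \<inter> b"
    obtain p where p: "p \<in> G" "UF_nbhd P le p \<subseteq> a" using Int.IH(1) G by blast
    obtain q where q: "q \<in> G" "UF_nbhd P le q \<subseteq> b" using Int.IH(2) G by blast
    have GU: "G \<in> UF P le" using gen_sub[OF Int.hyps(1)] G by blast
    then obtain r where r: "r \<in> G" "le r p" "le r q"
      using p(1) q(1) unfolding UF_def unbounded_filter_def is_filter_def by blast
    have "UF_nbhd P le r \<subseteq> UF_nbhd P le p" by (rule nbhd_mono[OF GU r(1) p(1) r(2)])
    moreover have "UF_nbhd P le r \<subseteq> UF_nbhd P le q" by (rule nbhd_mono[OF GU r(1) q(1) r(3)])
    ultimately have "UF_nbhd P le r \<subseteq> a \<inter> b" using p(2) q(2) by blast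
    then show "\<exists>p\<in>G. UF_nbhd P le p \<subseteq> a \<inter> b" using r(1) by blast
  qed
next
  case (UN K)
  show ?case
  proof
    fix G assume "G \<in> \<Union>K"
    then obtain k where k: "k \<in> K" "G \<in> k" by blast
    then obtain p where "p \<in> G" "UF_nbhd P le p \<subseteq> k" using UN.IH by blast
    then show "\<exists>p\<in>G. UF_nbhd P le p \<subseteq> \<Union>K" using k(1) by blast
  qed
next
  case (Basis s)
  show ?case
  proof
    fix G assume G: "G \<in> s"
    show "\<exists>p\<in>G. UF_nbhd P le p \<subseteq> s"
    proof (cases "s = UF P le")
      case True
      then have "G \<in> UF P le" using G by simp
      then obtain p where "p \<in> G" using UF_nonempty[OF assms(1)] by blast
      moreover have "UF_nbhd P le p \<subseteq> s" using True unfolding UF_nbhd_def by blast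
      ultimately show ?thesis by blast
    next
      case False
      then obtain p where "s = UF_nbhd P le p" using Basis by blast
      then show ?thesis using G unfolding UF_nbhd_def by blast
    qed
  qed
qed

lemma open_basic:
  assumes "P \<noteq> {}" "openin (UF_topology P le) U" "G \<in> U"
  shows "\<exists>p\<in>G. UF_nbhd P le p \<subseteq> U"
proof -
  have "generate_topology_on (insert (UF P le) (UF_nbhd P le ` P)) U"
    using assms(2) unfolding UF_topology_def by (rule openin_topology_generated_by)
  then show ?thesis using gen_basic[OF assms(1)] assms(3) by blast
qed

lemma Hausdorff_crit:
  assumes "\<And>G H. G \<in> UF P le \<Longrightarrow> H \<in> UF P le \<Longrightarrow> G \<noteq> H \<Longrightarrow>
     \<exists>p\<in>G. \<exists>q\<in>H. \<forall>K\<in>UF P le. \<not> (p \<in> K \<and> q \<in> K)"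
  shows "Hausdorff_space (UF_topology P le)"
  unfolding Hausdorff_space_def topspace_UF
proof (intro allI impI)
  fix G H assume h: "G \<in> UF P le \<and> H \<in> UF P le \<and> G \<noteq> H"
  then obtain p q where pq: "p \<in> G" "q \<in> H" "\<forall>K\<in>UF P le. \<not> (p \<in> K \<and> q \<in> K)"
    using assms by blast
  have pP: "p \<in> P" using h pq(1) unfolding UF_def unbounded_filter_def is_filter_def by blast
  have qP: "q \<in> P" using h pq(2) unfolding UF_def unbounded_filter_def is_filter_def by blast
  have "disjnt (UF_nbhd P le p) (UF_nbhd P le q)"
    using pq(3) unfolding disjnt_def UF_nbhd_def by blast
  moreover have "G \<in> UF_nbhd P le p" "H \<in> UF_nbhd P le q"
    using h pq unfolding UF_nbhd_def by blast+
  ultimately show "\<exists>U V. openin (UF_topology P le) U \<and> openin (UF_topology P le) V \<and> G \<in> U \<and> H \<in> V \<and> disjnt U V"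
    using open_nbhd[OF pP] open_nbhd[OF qP] by blast
qed

definition ea :: "nat \<Rightarrow> nat" where "ea n = 3 * n"
definition eb :: "nat \<Rightarrow> nat \<Rightarrow> nat" where "eb n m = 3 * prod_encode (n, m) + 1"
definition ec :: "nat \<Rightarrow> nat \<Rightarrow> nat" where "ec n m = 3 * prod_encode (n, m) + 2"

lemma m3a: "3 * (n::nat) \<noteq> 3 * x + 1" by presburger
lemma m3b: "3 * (n::nat) \<noteq> 3 * x + 2" by presburger
lemma m3c: "3 * (n::nat) + 1 \<noteq> 3 * x + 2" by presburger

lemma e_simps [simp]:
  "ea n = ea k \<longleftrightarrow> n = k"
  "eb n m = eb k l \<longleftrightarrow> n = k \<and> m = l"
  "ec n m = ec k l \<longleftrightarrow> n = k \<and> m = l"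
  "ea n \<noteq> eb k l" "eb k l \<noteq> ea n"
  "ea n \<noteq> ec k l" "ec k l \<noteq> ea n"
  "eb n m \<noteq> ec k l" "ec k l \<noteq> eb n m"
  unfolding ea_def eb_def ec_def
  using m3a m3b m3c by (simp_all add: prod_encode_eq) metis+

definition PP :: "nat set" where
  "PP = range ea \<union> {eb n m |n m. True} \<union> {ec n m |n m. True}"

definition LE :: "nat \<Rightarrow> nat \<Rightarrow> bool" where
  "LE x y \<longleftrightarrow> (\<exists>n k. x = ea n \<and> y = ea k \<and> k \<le> n) \<or>
     (\<exists>n m k. x = eb n m \<and> y = eb n k \<and> k \<le> m) \<or>
     (\<exists>n m. x = ec n m \<and> (y = ec n m \<or> (\<exists>k\<le>n. y = ea k) \<or> (\<exists>k\<le>m. y = eb n k)))"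

lemma LE_a [simp]: "LE (ea n) y \<longleftrightarrow> (\<exists>k\<le>n. y = ea k)"
  unfolding LE_def by auto
lemma LE_b [simp]: "LE (eb n m) y \<longleftrightarrow> (\<exists>k\<le>m. y = eb n k)"
  unfolding LE_def by auto
lemma LE_c [simp]: "LE (ec n m) y \<longleftrightarrow> y = ec n m \<or> (\<exists>k\<le>n. y = ea k) \<or> (\<exists>k\<le>m. y = eb n k)"
  unfolding LE_def by auto
lemma LE_to_c: "LE x (ec n m) \<longleftrightarrow> x = ec n m"
  unfolding LE_def by auto

lemma PP_cases: "x \<in> PP \<Longrightarrow> (\<And>n. x = ea n \<Longrightarrow> Q) \<Longrightarrow> (\<And>n m. x = eb n m \<Longrightarrow> Q)
   \<Longrightarrow> (\<And>n m. x = ec n m \<Longrightarrow> Q) \<Longrightarrow> Q"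
  unfolding PP_def by auto

lemma PP_mem [simp]: "ea n \<in> PP" "eb n m \<in> PP" "ec n m \<in> PP"
  unfolding PP_def by auto

lemma poset_PP: "poset_on PP LE"
  unfolding poset_on_def
proof (intro conjI ballI impI)
  fix x assume "x \<in> PP" then show "LE x x" by (rule PP_cases) auto
next
  fix x y assume "x \<in> PP" "y \<in> PP" "LE x y \<and> LE y x"
  then show "x = y" by (elim PP_cases[of x]) auto
next
  fix x y z assume "x \<in> PP" "y \<in> PP" "z \<in> PP" "LE x y \<and> LE y z"
  then show "LE x z" apply (elim PP_cases[of x]) apply auto using le_trans by blast+
qed

definition FA :: "nat set" where "FA = range ea"
definition HB :: "nat \<Rightarrow> nat set" where "HB n = range (eb n)"
definition CC :: "nat \<Rightarrow> nat \<Rightarrow> nat set" where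
  "CC n m = insert (ec n m) (ea ` {..n} \<union> eb n ` {..m})"

lemma mem_pts [simp]:
  "ea k \<in> FA" "eb n m \<notin> FA" "ec n m \<notin> FA"
  "ea k \<notin> HB n" "eb k m \<in> HB n \<longleftrightarrow> k = n" "ec k m \<notin> HB n"
  "ea k \<in> CC n m \<longleftrightarrow> k \<le> n" "eb k l \<in> CC n m \<longleftrightarrow> k = n \<and> l \<le> m"
  "ec k l \<in> CC n m \<longleftrightarrow> k = n \<and> l = m"
  unfolding FA_def HB_def CC_def by auto

lemma FA_UF: "FA \<in> UF PP LE"
  unfolding UF_def unbounded_filter_def is_filter_def strict_le_def
proof (intro CollectI conjI ballI impI subsetI notI)
  show "x \<in> PP" if "x \<in> FA" for x using that by (auto simp: FA_def)
  show "q \<in> FA" if "p \<in> FA" "q \<in> PP" "LE p q" for p q using that by (auto simp: FA_def)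
  show "\<exists>r\<in>FA. LE r p \<and> LE r q" if "p \<in> FA" "q \<in> FA" for p q
    using that by (auto simp: FA_def) (metis max.cobounded1 max.cobounded2)
  assume "\<exists>r\<in>PP. \<forall>p\<in>FA. LE r p \<and> \<not> LE p r"
  then obtain r where "r \<in> PP" "\<forall>p\<in>FA. LE r p \<and> \<not> LE p r" by blast
  then show False
  proof (elim PP_cases)
    fix n assume "r = ea n" then show False using \<open>\<forall>p\<in>FA. _\<close>[rule_format, of "ea (n+1)"] by auto
  next
    fix n m assume "r = eb n m" then show False using \<open>\<forall>p\<in>FA. _\<close>[rule_format, of "ea 0"] by auto
  next
    fix n m assume "r = ec n m" then show False using \<open>\<forall>p\<in>FA. _\<close>[rule_format, of "ea (n+1)"] by auto
  qed
qed

lemma HB_UF: "HB n \<in> UF PP LE"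
  unfolding UF_def unbounded_filter_def is_filter_def strict_le_def
proof (intro CollectI conjI ballI impI subsetI notI)
  show "x \<in> PP" if "x \<in> HB n" for x using that by (auto simp: HB_def)
  show "q \<in> HB n" if "p \<in> HB n" "q \<in> PP" "LE p q" for p q using that by (auto simp: HB_def)
  show "\<exists>r\<in>HB n. LE r p \<and> LE r q" if "p \<in> HB n" "q \<in> HB n" for p q
    using that by (auto simp: HB_def) (metis max.cobounded1 max.cobounded2)
  assume "\<exists>r\<in>PP. \<forall>p\<in>HB n. LE r p \<and> \<not> LE p r"
  then obtain r where "r \<in> PP" "\<forall>p\<in>HB n. LE r p \<and> \<not> LE p r" by blast
  then show False
  proof (elim PP_cases)
    fix k assume "r = ea k" then show False using \<open>\<forall>p\<in>HB n. _\<close>[rule_format, of "eb n 0"] by auto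
  next
    fix k m assume "r = eb k m" then show False using \<open>\<forall>p\<in>HB n. _\<close>[rule_format, of "eb n (m+1)"] by auto
  next
    fix k m assume "r = ec k m" then show False using \<open>\<forall>p\<in>HB n. _\<close>[rule_format, of "eb n (m+1)"] by auto
  qed
qed

lemma CC_UF: "CC n m \<in> UF PP LE"
  unfolding UF_def unbounded_filter_def is_filter_def strict_le_def
proof (intro CollectI conjI ballI impI subsetI notI)
  show "x \<in> PP" if "x \<in> CC n m" for x using that by (auto simp: CC_def)
  show "q \<in> CC n m" if "p \<in> CC n m" "q \<in> PP" "LE p q" for p q using that by (auto simp: CC_def)
  show "\<exists>r\<in>CC n m. LE r p \<and> LE r q" if "p \<in> CC n m" "q \<in> CC n m" for p q
    using that by (auto simp: CC_def intro!: bexI[of _ "ec n m"])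
  assume "\<exists>r\<in>PP. \<forall>p\<in>CC n m. LE r p \<and> \<not> LE p r"
  then obtain r where "\<forall>p\<in>CC n m. LE r p \<and> \<not> LE p r" by blast
  then have "LE r (ec n m) \<and> \<not> LE (ec n m) r" by (simp add: CC_def)
  then have "r = ec n m" "\<not> LE (ec n m) r" using LE_to_c by blast+
  then show False by simp
qed

lemma chain_full:
  fixes f :: "nat \<Rightarrow> nat"
  assumes "G \<subseteq> range f" "\<forall>i j. f i \<in> G \<longrightarrow> j \<le> i \<longrightarrow> f j \<in> G"
    "\<forall>j. \<not> (\<forall>x\<in>G. LE (f j) x \<and> \<not> LE x (f j))" "\<forall>i j. LE (f i) (f j) \<longleftrightarrow> j \<le> i"
  shows "G = range f"
proof
  show "range f \<subseteq> G"
  proof (rule ccontr)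
    assume "\<not> range f \<subseteq> G"
    then obtain j where j: "f j \<notin> G" by blast
    have "\<forall>x\<in>G. LE (f j) x \<and> \<not> LE x (f j)"
    proof
      fix x assume x: "x \<in> G"
      then obtain i where i: "x = f i" using assms(1) by blast
      have "\<not> j \<le> i" using assms(2) x i j by blast
      then show "LE (f j) x \<and> \<not> LE x (f j)" using assms(4) i by simp
    qed
    then show False using assms(3) by blast
  qed
qed (rule assms(1))

lemma UF_cases:
  assumes "G \<in> UF PP LE"
  shows "G = FA \<or> (\<exists>n. G = HB n) \<or> (\<exists>n m. G = CC n m)"
proof -
  have sub: "G \<subseteq> PP" and up: "\<forall>p\<in>G. \<forall>q\<in>PP. LE p q \<longrightarrow> q \<in> G"
    and dir: "\<forall>p\<in>G. \<forall>q\<in>G. \<exists>r\<in>G. LE r p \<and> LE r q"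
    and unb: "\<not> (\<exists>r\<in>PP. \<forall>p\<in>G. strict_le LE r p)"
    using assms unfolding UF_def unbounded_filter_def is_filter_def by auto
  have ne: "G \<noteq> {}" using unb PP_mem(1) by blast
  show ?thesis
  proof (cases "\<exists>n m. ec n m \<in> G")
    case True
    then obtain n m where c: "ec n m \<in> G" by blast
    have "G = CC n m"
    proof
      show "CC n m \<subseteq> G"
      proof
        fix x assume "x \<in> CC n m"
        then have "x \<in> PP" "LE (ec n m) x" by (auto simp: CC_def)
        then show "x \<in> G" using up c by blast
      qed
    next
      show "G \<subseteq> CC n m"
      proof
        fix x assume x: "x \<in> G"
        then obtain r where r: "r \<in> G" "LE r x" "LE r (ec n m)" using dir c by blast
        then have "r = ec n m" using LE_to_c by blast
        then show "x \<in> CC n m" using r by (auto simp: CC_def)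
      qed
    qed
    then show ?thesis by blast
  next
    case noc: False
    show ?thesis
    proof (cases "\<exists>k. ea k \<in> G")
      case True
      then obtain k where k: "ea k \<in> G" by blast
      have "G \<subseteq> range ea"
      proof
        fix x assume x: "x \<in> G"
        then obtain r where r: "r \<in> G" "LE r x" "LE r (ea k)" using dir k by blast
        have "r \<in> PP" using r sub by blast
        then obtain j where "r = ea j" using r noc by (elim PP_cases) auto
        then show "x \<in> range ea" using r by auto
      qed
      moreover have "\<forall>i j. ea i \<in> G \<longrightarrow> j \<le> i \<longrightarrow> ea j \<in> G" using up by auto
      moreover have "\<forall>j. \<not> (\<forall>x\<in>G. LE (ea j) x \<and> \<not> LE x (ea j))"
      proof
        fix j show "\<not> (\<forall>x\<in>G. LE (ea j) x \<and> \<not> LE x (ea j))"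
          using unb PP_mem(1)[of j] unfolding strict_le_def by blast
      qed
      moreover have "\<forall>i j. LE (ea i) (ea j) \<longleftrightarrow> j \<le> i" by auto
      ultimately have "G = range ea" by (rule chain_full)
      then show ?thesis by (simp add: FA_def)
    next
      case noa: False
      obtain x0 where x0: "x0 \<in> G" using ne by blast
      then have "x0 \<in> PP" using sub by blast
      then obtain n m0 where n: "x0 = eb n m0" using x0 noa noc by (elim PP_cases) auto
      have "G \<subseteq> range (eb n)"
      proof
        fix x assume x: "x \<in> G"
        then obtain r where r: "r \<in> G" "LE r x" "LE r x0" using dir x0 by blast
        have "r \<in> PP" using r sub by blast
        then obtain k l where "r = eb k l" using r noc noa by (elim PP_cases) auto
        then show "x \<in> range (eb n)" using r n by auto
      qed
      moreover have "\<forall>i j. eb n i \<in> G \<longrightarrow> j \<le> i \<longrightarrow> eb n j \<in> G" using up by auto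
      moreover have "\<forall>j. \<not> (\<forall>x\<in>G. LE (eb n j) x \<and> \<not> LE x (eb n j))"
      proof
        fix j show "\<not> (\<forall>x\<in>G. LE (eb n j) x \<and> \<not> LE x (eb n j))"
          using unb PP_mem(2)[of n j] unfolding strict_le_def by blast
      qed
      moreover have "\<forall>i j. LE (eb n i) (eb n j) \<longleftrightarrow> j \<le> i" by auto
      ultimately have "G = range (eb n)" by (rule chain_full)
      then show ?thesis by (auto simp: HB_def)
    qed
  qed
qed

lemma UF_elim: "K \<in> UF PP LE \<Longrightarrow> (K = FA \<Longrightarrow> Q) \<Longrightarrow> (\<And>n. K = HB n \<Longrightarrow> Q)
   \<Longrightarrow> (\<And>n m. K = CC n m \<Longrightarrow> Q) \<Longrightarrow> Q"
  using UF_cases by blast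

definition SEP :: "nat set \<Rightarrow> nat set \<Rightarrow> bool" where
  "SEP G H \<longleftrightarrow> (\<exists>p\<in>G. \<exists>q\<in>H. \<forall>K\<in>UF PP LE. \<not> (p \<in> K \<and> q \<in> K))"

lemma SEP_sym: "SEP G H \<Longrightarrow> SEP H G"
  unfolding SEP_def by blast

lemma SEP_FH: "SEP FA (HB n)"
  unfolding SEP_def
  by (rule bexI[of _ "ea (n+1)"], rule bexI[of _ "eb n 0"]) (auto elim!: UF_elim)

lemma SEP_FC: "SEP FA (CC n m)"
  unfolding SEP_def
  by (rule bexI[of _ "ea (n+1)"], rule bexI[of _ "ec n m"]) (auto elim!: UF_elim)

lemma SEP_HH: "n \<noteq> k \<Longrightarrow> SEP (HB n) (HB k)"
  unfolding SEP_def
  by (rule bexI[of _ "eb n 0"], rule bexI[of _ "eb k 0"]) (auto elim!: UF_elim)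

lemma SEP_HC: "SEP (HB n) (CC k m)"
  unfolding SEP_def
  by (rule bexI[of _ "eb n (m+1)"], rule bexI[of _ "ec k m"]) (auto elim!: UF_elim)

lemma SEP_CC: "(n, m) \<noteq> (k, l) \<Longrightarrow> SEP (CC n m) (CC k l)"
  unfolding SEP_def
  by (rule bexI[of _ "ec n m"], rule bexI[of _ "ec k l"]) (auto elim!: UF_elim)

lemma SEP_all:
  assumes "G \<in> UF PP LE" "H \<in> UF PP LE" "G \<noteq> H"
  shows "SEP G H"
  using UF_cases[OF assms(1)] UF_cases[OF assms(2)] assms(3)
  by (auto intro: SEP_FH SEP_FC SEP_HH SEP_HC SEP_CC SEP_sym[OF SEP_FH] SEP_sym[OF SEP_FC] SEP_sym[OF SEP_HC])

theorem corollary2p19: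
  shows "\<exists>(P :: nat set) (le :: nat \<Rightarrow> nat \<Rightarrow> bool).
           poset_on P le \<and>
           Hausdorff_space (UF_topology P le) \<and>
           \<not> regular_space (UF_topology P le)"
proof (rule exI[of _ PP], rule exI[of _ LE], intro conjI)
  show "poset_on PP LE" by (rule poset_PP)
  show "Hausdorff_space (UF_topology PP LE)"
    apply (rule Hausdorff_crit) using SEP_all unfolding SEP_def by blast
  show "\<not> regular_space (UF_topology PP LE)"
  proof
    assume reg: "regular_space (UF_topology PP LE)"
    let ?X = "UF_topology PP LE"
    let ?C = "UF PP LE - UF_nbhd PP LE (ea 0)"
    have eq: "UF PP LE - ?C = UF_nbhd PP LE (ea 0)" unfolding UF_nbhd_def by blast
    have cl: "closedin ?X ?C" unfolding closedin_def topspace_UF eq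
      using open_nbhd[of "ea 0" PP LE] PP_mem(1)[of 0] by blast
    have FAin: "FA \<in> topspace ?X - ?C" 
      using FA_UF mem_pts(1)[of 0] unfolding topspace_UF UF_nbhd_def by blast
    obtain U V where UV: "openin ?X U" "openin ?X V" "FA \<in> U" "?C \<subseteq> V" "disjnt U V"
      using reg[unfolded regular_space_def, rule_format, OF conjI[OF cl FAin]] by blast
    have ne: "PP \<noteq> {}" using PP_mem(1) by blast
    obtain p where p: "p \<in> FA" "UF_nbhd PP LE p \<subseteq> U" using open_basic[OF ne UV(1) UV(3)] by blast
    then obtain n where pn: "p = ea n" unfolding FA_def by blast
    have "HB n \<in> ?C" using HB_UF mem_pts(4)[of 0 n] unfolding UF_nbhd_def by blast
    then have "HB n \<in> V" using UV(4) by blast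
    then obtain q where q: "q \<in> HB n" "UF_nbhd PP LE q \<subseteq> V" using open_basic[OF ne UV(2)] by blast
    then obtain m where qm: "q = eb n m" unfolding HB_def by blast
    have "CC n m \<in> UF_nbhd PP LE (ea n)" "CC n m \<in> UF_nbhd PP LE (eb n m)"
      by (simp_all add: CC_UF UF_nbhd_def)
    then show False using p(2) q(2) pn qm UV(5) unfolding disjnt_def by blast
  qed
qed

end
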